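(* Let $s\ge 1$, $q=2^s$, and let $k,n$ be integers with $n\ge 2k\ge 2$. Let $g(X)=X^k+c_{k-1}X^{k-1}+\dots+c_1X+c_0\in\mathbb{F}_q[X]$ be a monic polynomial of degree $k$ dividing $X^n-1$, and suppose the cyclic code of length $n$ over $\mathbb{F}_q$ generated by $g(X)$ (the set of polynomials of degree $<n$ that are multiples of $g$, viewed as vectors of coefficients, which is an $[n,n-k]_q$ code) is MDS. Let $C=\mathsf{Companion}(c_0,\dots,c_{k-1})$. Then the matrix $C^k$ is MDS.
   Context: For $c_0,\dots,c_{k-1}\in\mathbb{F}_q$, $\mathsf{Companion}(c_0,\dots,c_{k-1})$ denotes the $k\times k$ matrix whose first $k-1$ rows are $e_2,e_3,\dots,e_k$ (ones on the superdiagonal, zeros elsewhere) and whose last row is $(c_0,c_1,\dots,c_{k-1})$. A linear code over $\mathbb{F}_q$ of length $n$ and dimension $k'$ is MDS if its minimal Hamming distance equals $n-k'+1$. A $k\times k$ matrix $M$ over $\mathbb{F}_q$ is called MDS if the $k\times 2k$ matrix $[I_k\mid M]$ generates an MDS code of length $2k$ and dimension $k$ (equivalently, minimal distance $k+1$). *)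

theory Defs
  imports "HOL-Computational_Algebra.Polynomial" "Jordan_Normal_Form.Matrix"
begin

definition hamming_dist :: "'a vec \<Rightarrow> 'a vec \<Rightarrow> nat" where
  "hamming_dist x y = card {i. i < dim_vec x \<and> x $ i \<noteq> y $ i}"

definition min_dist :: "'a vec set \<Rightarrow> nat" where
  "min_dist C = Min {hamming_dist x y | x y. x \<in> C \<and> y \<in> C \<and> x \<noteq> y}"

definition is_MDS_code :: "nat \<Rightarrow> nat \<Rightarrow> 'a vec set \<Rightarrow> bool" where
  "is_MDS_code n k' C \<longleftrightarrow> min_dist C = n - k' + 1"

definition cyclic_code :: "nat \<Rightarrow> 'a::comm_ring_1 poly \<Rightarrow> 'a vec set" where
  "cyclic_code n g = {vec n (\<lambda>i. coeff p i) | p. degree p < n \<and> g dvd p}"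

(* Companion(c_0,...,c_{k-1}): rows e_2,...,e_k, last row (c_0,...,c_{k-1}) *)
definition companion_mat :: "nat \<Rightarrow> (nat \<Rightarrow> 'a::{zero,one}) \<Rightarrow> 'a mat" where
  "companion_mat k c = mat k k (\<lambda>(i,j). if i + 1 < k then (if j = i + 1 then 1 else 0) else c j)"

(* the code generated by the k x 2k matrix [I_k | M]: all u [I_k | M] = (u, u M) *)
definition systematic_code :: "'a::semiring_0 mat \<Rightarrow> 'a vec set" where
  "systematic_code M = (let k = dim_row M in
     {vec (2 * k) (\<lambda>i. if i < k then u $ i else (transpose_mat M *\<^sub>v u) $ (i - k)) | u. u \<in> carrier_vec k})"

definition is_MDS_matrix :: "'a::semiring_0 mat \<Rightarrow> bool" where
  "is_MDS_matrix M \<longleftrightarrow> is_MDS_code (2 * dim_row M) (dim_row M) (systematic_code M)"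

end

theory Submission
  imports Defs "HOL-Number_Theory.Residues"
begin

hide_const (open) up_ring.monom up_ring.coeff



lemma neg2: "(1::'a::field) + 1 = 0 \<Longrightarrow> - (x::'a) = x"
proof -
  assume "(1::'a::field) + 1 = 0" 
  hence "x + x = 0" by (metis distrib_left mult.right_neutral mult_zero_right) 
  thus ?thesis by (metis add.inverse_unique)
qed

definition pv :: "'a::comm_ring_1 vec \<Rightarrow> 'a poly" where
  "pv v = (\<Sum>i<dim_vec v. monom (v$i) i)"

lemma coeff_pv: "coeff (pv v) i = (if i < dim_vec v then v$i else 0)"
  by (simp add: pv_def coeff_sum coeff_monom)

lemma degree_pv: "dim_vec v > 0 \<Longrightarrow> degree (pv v) < dim_vec v"
proof -
  assume "dim_vec v > 0"
  have "degree (pv v) \<le> dim_vec v - 1" by (rule degree_le) (auto simp: coeff_pv)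
  thus ?thesis using \<open>dim_vec v > 0\<close> by linarith
qed

lemma pv_vec: "degree p < k \<Longrightarrow> pv (vec k (\<lambda>i. coeff p i)) = p"
  by (rule poly_eqI) (auto simp: coeff_pv coeff_eq_0)

lemma vec_pv: "v \<in> carrier_vec k \<Longrightarrow> vec k (\<lambda>i. coeff (pv v) i) = v"
  by (auto simp: coeff_pv)

lemma companion_step:
  fixes g :: "'a::field poly"
  assumes c2: "(1::'a) + 1 = 0" and k: "k \<ge> 1" and lc: "lead_coeff g = 1" and dg: "degree g = k"
    and w: "w \<in> carrier_vec k"
  shows "transpose_mat (companion_mat k (\<lambda>i. coeff g i)) *\<^sub>v w
       = vec k (\<lambda>i. coeff ((monom 1 1 * pv w) mod g) i)"
proof -
  have neg: "\<And>x::'a. - x = x" using c2 by (rule neg2)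
  define a where "a = w $ (k - 1)"
  define q where "q = monom 1 1 * pv w - Polynomial.smult a g"
  have cq: "coeff q i = (if i = 0 then 0 else coeff (pv w) (i - 1)) + a * coeff g i" for i
  proof -
    have "coeff q i = (if i = 0 then 0 else coeff (pv w) (i - 1)) - a * coeff g i"
      by (simp add: q_def coeff_monom_mult)
    also have "\<dots> = (if i = 0 then 0 else coeff (pv w) (i - 1)) + a * coeff g i"
      using neg[of "a * coeff g i"] by (simp only: diff_conv_add_uminus)
    finally show ?thesis .
  qed
  have "degree q \<le> k - 1"
  proof (rule degree_le, intro allI impI)
    fix i assume "k - 1 < i"
    show "coeff q i = 0"
    proof (cases "i = k")
      case True
      thus ?thesis using k w lc dg c2 by (auto simp: cq coeff_pv a_def)
    next
      case False
      thus ?thesis using k w \<open>k - 1 < i\<close> dg by (auto simp: cq coeff_pv coeff_eq_0)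
    qed
  qed
  hence dq: "degree q < degree g" using k dg by linarith
  have "(monom 1 1 * pv w) mod g = q mod g"
  proof -
    have "monom 1 1 * pv w = q + Polynomial.smult a g" by (simp add: q_def)
    also have "\<dots> = q + [:a:] * g" by simp
    finally show ?thesis by (metis mod_mult_self1)
  qed
  also have "\<dots> = q" using dq by (rule mod_poly_less)
  finally have mq: "(monom 1 1 * pv w) mod g = q" .
  show ?thesis
  proof (rule eq_vecI)
    show "dim_vec (transpose_mat (companion_mat k (\<lambda>i. coeff g i)) *\<^sub>v w) = dim_vec (vec k (\<lambda>i. coeff ((monom 1 1 * pv w) mod g) i))"
      by (simp add: companion_mat_def)
  next
    fix i assume i: "i < dim_vec (vec k (\<lambda>i. coeff ((monom 1 1 * pv w) mod g) i))"
    hence i: "i < k" by simp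
    have "(transpose_mat (companion_mat k (\<lambda>i. coeff g i)) *\<^sub>v w) $ i
        = (\<Sum>j<k. (if j + 1 < k then (if i = j + 1 then 1 else 0) else coeff g i) * w $ j)"
      using i w by (simp add: companion_mat_def mult_mat_vec_def scalar_prod_def lessThan_atLeast0)
    also have "\<dots> = (\<Sum>j<k-1. (if i = j + 1 then w $ j else 0)) + coeff g i * a"
    proof -
      have "{..<k} = insert (k-1) {..<k-1}" using k by auto
      hence "(\<Sum>j<k. (if j + 1 < k then (if i = j + 1 then 1 else 0) else coeff g i) * w $ j)
          = (if k - 1 + 1 < k then (if i = k - 1 + 1 then 1 else 0) else coeff g i) * w $ (k-1)
            + (\<Sum>j<k-1. (if j + 1 < k then (if i = j + 1 then 1 else 0) else coeff g i) * w $ j)"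
        by simp
      also have "\<dots> = coeff g i * a + (\<Sum>j<k-1. (if i = j + 1 then w $ j else 0))"
        using k by (auto simp: a_def intro!: sum.cong)
      finally show ?thesis by simp
    qed
    also have "(\<Sum>j<k-1. (if i = j + 1 then w $ j else 0)) = (if i = 0 then 0 else coeff (pv w) (i - 1))"
    proof (cases "i = 0")
      case True thus ?thesis by simp
    next
      case False
      hence "(\<Sum>j<k-1. (if i = j + 1 then w $ j else 0)) = (\<Sum>j<k-1. (if j = i - 1 then w $ j else 0))"
        by (intro sum.cong) auto
      also have "\<dots> = w $ (i - 1)" using False i by (simp add: sum.delta)
      finally show ?thesis using False i w by (simp add: coeff_pv)
    qed
    finally show "(transpose_mat (companion_mat k (\<lambda>i. coeff g i)) *\<^sub>v w) $ i = vec k (\<lambda>i. coeff ((monom 1 1 * pv w) mod g) i) $ i"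
      using i unfolding mq by (simp add: cq ac_simps)
  qed
qed
lemma pow_step:
  fixes g :: "'a::field poly"
  assumes c2: "(1::'a) + 1 = 0" and k: "k \<ge> 1" and lc: "lead_coeff g = 1" and dg: "degree g = k"
  shows "w \<in> carrier_vec k \<Longrightarrow> transpose_mat (companion_mat k (\<lambda>i. coeff g i) ^\<^sub>m m) *\<^sub>v w
       = vec k (\<lambda>i. coeff ((monom 1 m * pv w) mod g) i)"
proof (induction m arbitrary: w)
  case 0
  have Cc: "companion_mat k (\<lambda>i. coeff g i) \<in> carrier_mat k k" by (simp add: companion_mat_def)
  have "degree (pv w) < degree g" using degree_pv[of w] 0 k dg by auto
  hence "pv w mod g = pv w" by (rule mod_poly_less)
  thus ?case using 0 Cc vec_pv[OF 0] by (simp add: monom_eq_1)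
next
  case (Suc m)
  define C where "C = companion_mat k (\<lambda>i. coeff g i)"
  have Cc: "C \<in> carrier_mat k k" by (simp add: companion_mat_def C_def)
  define r where "r = (monom 1 m * pv w) mod g"
  have dr: "degree r < k"
  proof (cases "r = 0")
    case True thus ?thesis using k by simp
  next
    case False
    have "g \<noteq> 0" using lc by auto
    thus ?thesis using False dg degree_mod_less' unfolding r_def by blast
  qed
  have "transpose_mat (C ^\<^sub>m Suc m) *\<^sub>v w = (transpose_mat C * transpose_mat (C ^\<^sub>m m)) *\<^sub>v w"
    using Cc by (simp add: transpose_mult[of _ k k _ k])
  also have "\<dots> = transpose_mat C *\<^sub>v (transpose_mat (C ^\<^sub>m m) *\<^sub>v w)"
    using Cc Suc.prems by (intro assoc_mult_mat_vec[of _ k k _ k]) auto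
  also have "transpose_mat (C ^\<^sub>m m) *\<^sub>v w = vec k (\<lambda>i. coeff r i)"
    unfolding C_def r_def by (rule Suc.IH[OF Suc.prems])
  also have "transpose_mat C *\<^sub>v vec k (\<lambda>i. coeff r i) = vec k (\<lambda>i. coeff ((monom 1 1 * pv (vec k (\<lambda>i. coeff r i))) mod g) i)"
    unfolding C_def by (rule companion_step[OF c2 k lc dg]) simp
  also have "pv (vec k (\<lambda>i. coeff r i)) = r" using dr by (rule pv_vec)
  also have "(monom 1 1 * r) mod g = (monom 1 1 * (monom 1 m * pv w)) mod g"
    unfolding r_def by (rule mod_mult_right_eq)
  also have "monom 1 1 * (monom 1 m * pv w) = monom 1 (Suc m) * pv w"
    by (simp add: mult.assoc[symmetric] mult_monom)
  finally show ?case unfolding C_def .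
qed

lemma hd_le_dim: "hamming_dist x y \<le> dim_vec x"
proof -
  have "card {i. i < dim_vec x \<and> x $ i \<noteq> y $ i} \<le> card {..<dim_vec x}"
    by (intro card_mono) auto
  thus ?thesis by (simp add: hamming_dist_def)
qed

lemma min_dist_fin:
  assumes "\<forall>z\<in>C. dim_vec z = N"
  shows "finite {hamming_dist x y | x y. x \<in> C \<and> y \<in> C \<and> x \<noteq> y}"
proof -
  have "{hamming_dist x y | x y. x \<in> C \<and> y \<in> C \<and> x \<noteq> y} \<subseteq> {..N}"
  proof
    fix d assume "d \<in> {hamming_dist x y | x y. x \<in> C \<and> y \<in> C \<and> x \<noteq> y}"
    then obtain x y where d: "d = hamming_dist x y" "x \<in> C" by blast
    have "dim_vec x = N" using assms d(2) by blast
    thus "d \<in> {..N}" using hd_le_dim[of x y] d(1) by simp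
  qed
  thus ?thesis by (rule finite_subset) simp
qed

lemma min_dist_le:
  assumes "x \<in> C" "y \<in> C" "x \<noteq> y" "\<forall>z\<in>C. dim_vec z = N"
  shows "min_dist C \<le> hamming_dist x y"
proof -
  have m: "hamming_dist x y \<in> {hamming_dist x y | x y. x \<in> C \<and> y \<in> C \<and> x \<noteq> y}"
    using assms(1-3) by blast
  show ?thesis unfolding min_dist_def by (rule Min_le[OF min_dist_fin[OF assms(4)] m])
qed

lemma min_dist_eq:
  assumes "x0 \<in> C" "y0 \<in> C" "x0 \<noteq> y0" "\<forall>z\<in>C. dim_vec z = N"
    and "hamming_dist x0 y0 \<le> m"
    and "\<And>x y. x \<in> C \<Longrightarrow> y \<in> C \<Longrightarrow> x \<noteq> y \<Longrightarrow> hamming_dist x y \<ge> m"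
  shows "min_dist C = m"
proof -
  let ?D = "{hamming_dist x y | x y. x \<in> C \<and> y \<in> C \<and> x \<noteq> y}"
  have fin: "finite ?D" by (rule min_dist_fin[OF assms(4)])
  have ne: "?D \<noteq> {}" using assms(1-3) by blast
  have "Min ?D \<in> ?D" using fin ne by (rule Min_in)
  then obtain x y where "Min ?D = hamming_dist x y" "x \<in> C" "y \<in> C" "x \<noteq> y" by blast
  hence "Min ?D \<ge> m" using assms(6) by simp
  moreover have "Min ?D \<le> m" using min_dist_le[OF assms(1-4)] assms(5) unfolding min_dist_def by simp
  ultimately show ?thesis unfolding min_dist_def by simp
qed

lemma char2:
  assumes "s \<ge> 1" and "card (UNIV :: 'a::{field,finite} set) = 2 ^ s"
  shows "(1::'a) + 1 = 0"
proof -
  have d: "CHAR('a) dvd 2 ^ s" using CHAR_dvd_CARD[where 'a='a] assms(2) by simp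
  then obtain j where j: "j \<le> s" "CHAR('a) = 2 ^ j"
    using divides_primepow_nat[OF two_is_prime_nat] by blast
  have "j \<noteq> 0" using j CHAR_not_1 by (metis power_0 One_nat_def)
  have "(of_nat (2 ^ j) :: 'a) = 0" using j(2) of_nat_CHAR by metis
  hence "(of_nat 2 :: 'a) ^ j = 0" by simp
  hence "(of_nat 2 :: 'a) = 0" by simp
  thus ?thesis by simp
qed

theorem mainTheorem1:
  fixes g :: "'a::{field,finite} poly" and s k n :: nat
  assumes "s \<ge> 1" and "card (UNIV :: 'a set) = 2 ^ s"
    and "n \<ge> 2 * k" and "2 * k \<ge> 2"
    and "lead_coeff g = 1" and "degree g = k"
    and "g dvd (monom 1 n - 1)"
    and "is_MDS_code n (n - k) (cyclic_code n g)"
  shows "is_MDS_matrix (companion_mat k (\<lambda>i. coeff g i) ^\<^sub>m k)"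
proof -
  have c2: "(1::'a) + 1 = 0" using char2 assms(1,2) by blast
  have neg: "\<And>x::'a. - x = x" using c2 by (rule neg2)
  have k: "k \<ge> 1" using assms(4) by simp
  have lc: "lead_coeff g = 1" and dg: "degree g = k" using assms by auto
  have gnz: "g \<noteq> 0" using lc by auto
  define C where "C = companion_mat k (\<lambda>i. coeff g i)"
  have Cc: "C \<in> carrier_mat k k" by (simp add: companion_mat_def C_def)
  define M where "M = C ^\<^sub>m k"
  have Mc: "M \<in> carrier_mat k k" using Cc by (simp add: M_def)
  have MT: "transpose_mat M \<in> carrier_mat k k" using Mc by simp
  have dM: "dim_row M = k" using Mc by simp
  define cw where "cw u = vec (2 * k) (\<lambda>i. if i < k then u $ i else (transpose_mat M *\<^sub>v u) $ (i - k))" for u :: "'a vec"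
  have SC: "systematic_code M = {cw u | u. u \<in> carrier_vec k}"
    unfolding systematic_code_def Let_def dM cw_def by simp
  have MTu: "transpose_mat M *\<^sub>v u = vec k (\<lambda>i. coeff ((monom 1 k * pv u) mod g) i)" if "u \<in> carrier_vec k" for u
    unfolding M_def C_def by (rule pow_step[OF c2 k lc dg that])
  have cyc: "min_dist (cyclic_code n g) = k + 1"
    using assms(8) assms(3) unfolding is_MDS_code_def by simp
  have cycdim: "\<forall>z\<in>cyclic_code n g. dim_vec z = n" unfolding cyclic_code_def by auto
  have zero_cyc: "0\<^sub>v n \<in> cyclic_code n g"
    unfolding cyclic_code_def zero_vec_def using assms(3,4) by (intro CollectI exI[of _ 0]) auto
  have wt: "card {i. i < 2 * k \<and> cw u $ i \<noteq> 0} \<ge> k + 1" if u: "u \<in> carrier_vec k" "u \<noteq> 0\<^sub>v k" for u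
  proof -
    define h where "h = pv u"
    define r where "r = (monom 1 k * h) mod g"
    define p where "p = r + monom 1 k * h"
    have dr: "degree r < k"
    proof (cases "r = 0")
      case True thus ?thesis using k by simp
    next
      case False
      thus ?thesis using gnz dg degree_mod_less' unfolding r_def by blast
    qed
    have cr: "coeff r i = 0" if "i \<ge> k" for i using dr that by (intro coeff_eq_0) auto
    have ch: "coeff h i = (if i < k then u $ i else 0)" for i using u by (simp add: h_def coeff_pv)
    have cp: "coeff p i = (if i < k then coeff r i else coeff h (i - k))" for i
      using cr by (simp add: p_def coeff_monom_mult)
    have cp0: "coeff p i = 0" if "i \<ge> 2 * k" for i using that by (simp add: cp ch)
    have negr: "- r = r" by (rule poly_eqI) (simp add: neg)
    have "p = monom 1 k * h + r" unfolding p_def by (rule add.commute)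
    also have "\<dots> = monom 1 k * h + (- r)" by (simp only: negr)
    also have "\<dots> = monom 1 k * h - r" by (rule diff_conv_add_uminus[symmetric])
    finally have "p = monom 1 k * h - r" .
    hence gp: "g dvd p" unfolding r_def by (simp add: dvd_minus_mod)
    have "degree p \<le> 2 * k - 1"
    proof (rule degree_le, intro allI impI)
      fix i assume "2 * k - 1 < i"
      hence "2 * k \<le> i" using k by linarith
      thus "coeff p i = 0" by (rule cp0)
    qed
    hence dp: "degree p < n" using assms(3) k by linarith
    have pin: "vec n (\<lambda>i. coeff p i) \<in> cyclic_code n g" unfolding cyclic_code_def using gp dp by blast
    have "\<exists>j<k. u $ j \<noteq> 0"
    proof (rule ccontr)
      assume "\<not> (\<exists>j<k. u $ j \<noteq> 0)"
      hence "u = 0\<^sub>v k" using u(1) by (intro eq_vecI) auto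
      thus False using u(2) by simp
    qed
    then obtain j where j: "j < k" "u $ j \<noteq> 0" by blast
    have "coeff p (k + j) \<noteq> 0" using j by (simp add: cp ch)
    note cpkj = this
    have kj: "k + j < n" using j(1) assms(3) by linarith
    have pnz: "vec n (\<lambda>i. coeff p i) \<noteq> 0\<^sub>v n"
    proof
      assume "vec n (\<lambda>i. coeff p i) = 0\<^sub>v n"
      hence "vec n (\<lambda>i. coeff p i) $ (k + j) = 0\<^sub>v n $ (k + j)" by simp
      thus False using kj cpkj by simp
    qed
    have "k + 1 \<le> hamming_dist (vec n (\<lambda>i. coeff p i)) (0\<^sub>v n)"
      using min_dist_le[OF pin zero_cyc pnz cycdim] cyc by simp
    also have "hamming_dist (vec n (\<lambda>i. coeff p i)) (0\<^sub>v n) = card {i. i < 2 * k \<and> coeff p i \<noteq> 0}"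
    proof -
      have "{i. i < n \<and> vec n (\<lambda>i. coeff p i) $ i \<noteq> 0\<^sub>v n $ i} = {i. i < 2 * k \<and> coeff p i \<noteq> 0}"
        using cp0 assms(3) by (auto simp: not_less) (meson cp0 not_le)
      thus ?thesis by (simp add: hamming_dist_def)
    qed
    also have "card {i. i < 2 * k \<and> coeff p i \<noteq> 0} = card {i. i < 2 * k \<and> cw u $ i \<noteq> 0}"
    proof -
      define sw where "sw i = (if i < k then i + k else i - k)" for i :: nat
      have swsw: "sw (sw i) = i" if "i < 2 * k" for i using that by (auto simp: sw_def)
      have swlt: "sw i < 2 * k" if "i < 2 * k" for i using that by (auto simp: sw_def)
      have MTu': "transpose_mat M *\<^sub>v u = vec k (\<lambda>i. coeff r i)"
        using MTu[OF u(1)] unfolding r_def h_def .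
      have cwi: "cw u $ i = coeff p (sw i)" if "i < 2 * k" for i
        using that cr[of "i + k"] MTu' u(1)
        by (auto simp: cw_def sw_def cp ch)
      have eq: "{i. i < 2 * k \<and> cw u $ i \<noteq> 0} = sw ` {i. i < 2 * k \<and> coeff p i \<noteq> 0}"
      proof (intro equalityI subsetI)
        fix i assume "i \<in> {i. i < 2 * k \<and> cw u $ i \<noteq> 0}"
        hence i: "i < 2 * k" "coeff p (sw i) \<noteq> 0" using cwi by auto
        show "i \<in> sw ` {i. i < 2 * k \<and> coeff p i \<noteq> 0}"
          using i swsw[of i] swlt[of i] by (intro image_eqI[of _ _ "sw i"]) auto
      next
        fix i assume "i \<in> sw ` {i. i < 2 * k \<and> coeff p i \<noteq> 0}"
        then obtain j where j: "i = sw j" "j < 2 * k" "coeff p j \<noteq> 0" by auto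
        thus "i \<in> {i. i < 2 * k \<and> cw u $ i \<noteq> 0}" using swlt[of j] cwi[of "sw j"] swsw[of j] by auto
      qed
      have "inj_on sw {i. i < 2 * k \<and> coeff p i \<noteq> 0}"
        by (rule inj_onI) (metis (no_types, lifting) mem_Collect_eq swsw)
      thus ?thesis unfolding eq by (simp add: card_image)
    qed
    finally show ?thesis .
  qed
  have cwdim: "dim_vec (cw u) = 2 * k" for u by (simp add: cw_def)
  have cwdiff: "cw u $ i - cw v $ i = cw (u - v) $ i" if "u \<in> carrier_vec k" "v \<in> carrier_vec k" "i < 2 * k" for u v i
    using that mult_minus_distrib_mat_vec[OF MT that(1,2)] MT
    by (auto simp: cw_def)
  have dist: "hamming_dist (cw u) (cw v) = card {i. i < 2 * k \<and> cw (u - v) $ i \<noteq> 0}"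
    if "u \<in> carrier_vec k" "v \<in> carrier_vec k" for u v
  proof -
    have "{i. i < dim_vec (cw u) \<and> cw u $ i \<noteq> cw v $ i} = {i. i < 2 * k \<and> cw (u - v) $ i \<noteq> 0}"
      using cwdiff[OF that] by (auto simp: cwdim) (metis eq_iff_diff_eq_0)+
    thus ?thesis by (simp add: hamming_dist_def)
  qed
  define e where "e = (unit_vec k 0 :: 'a vec)"
  have ec: "e \<in> carrier_vec k" by (simp add: e_def)
  have zc: "0\<^sub>v k \<in> carrier_vec k" by simp
  have e0: "cw e $ 0 = 1" "cw (0\<^sub>v k) $ 0 = 0" using k by (auto simp: cw_def e_def)
  have s1: "cw e \<in> systematic_code M" "cw (0\<^sub>v k) \<in> systematic_code M" unfolding SC using ec zc by blast+
  have s2: "cw e \<noteq> cw (0\<^sub>v k)" using e0 by auto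
  have s3: "\<forall>z\<in>systematic_code M. dim_vec z = 2 * k" unfolding SC using cwdim by auto
  have "hamming_dist (cw e) (cw (0\<^sub>v k)) = card {i. i < 2 * k \<and> cw e $ i \<noteq> 0}"
    using dist[OF ec zc] minus_zero_vec[OF ec] by simp
  also have "\<dots> \<le> card (insert 0 {k..<2 * k})"
    by (intro card_mono) (auto simp: cw_def e_def split: if_splits)
  also have "\<dots> \<le> k + 1" by (simp add: card_insert_le_m1)
  finally have s4: "hamming_dist (cw e) (cw (0\<^sub>v k)) \<le> k + 1" .
  have s5: "k + 1 \<le> hamming_dist x y"
    if xy: "x \<in> systematic_code M" "y \<in> systematic_code M" "x \<noteq> y" for x y
  proof -
    obtain u v where uv: "x = cw u" "y = cw v" "u \<in> carrier_vec k" "v \<in> carrier_vec k"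
      using xy(1,2) unfolding SC by blast
    have "u \<noteq> v" using uv xy(3) by blast
    have "u - v \<noteq> 0\<^sub>v k"
    proof
      assume "u - v = 0\<^sub>v k"
      have "u = v"
      proof (rule eq_vecI)
        show "dim_vec u = dim_vec v" using uv by simp
      next
        fix i assume i: "i < dim_vec v"
        from \<open>u - v = 0\<^sub>v k\<close> have "(u - v) $ i = 0\<^sub>v k $ i" by simp
        hence "u $ i - v $ i = 0" using i uv by simp
        thus "u $ i = v $ i" by simp
      qed
      thus False using \<open>u \<noteq> v\<close> by simp
    qed
    hence "k + 1 \<le> card {i. i < 2 * k \<and> cw (u - v) $ i \<noteq> 0}" using uv by (intro wt) auto
    thus ?thesis using dist uv by simp
  qed
  have "min_dist (systematic_code M) = k + 1"
    by (rule min_dist_eq[OF s1 s2 s3 s4 s5])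
  thus ?thesis unfolding is_MDS_matrix_def is_MDS_code_def dM M_def C_def[symmetric]
    using Cc by simp
qed

end
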